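(* For the action of $D_6$ on $\mathbb{C}\langle u,v\rangle$ described in the context, the Hilbert series of the invariant algebra is \[ H\big(\mathbb{C}\langle u,v\rangle^{D_6},t\big)=\frac{1-t-t^2}{1-t-2t^2}=1+t^2+t^3+3t^4+5t^5+11t^6+21t^7+\cdots, \] and if $Y$ is any set of homogeneous elements freely generating $\mathbb{C}\langle u,v\rangle^{D_6}$ as an algebra (such a set exists since this algebra is free), then $Y$ contains no elements of degree $1$, and for every $d\ge 2$ the number of elements of $Y$ of degree $d$ equals the Fibonacci number $F_{d-1}$ (where $F_1=F_2=1$, $F_{j+2}=F_{j+1}+F_j$); equivalently, the generating function of the degrees of the free generators is $\frac{t^2}{1-t-t^2}$.
   Context: $\mathbb{C}\langle u,v\rangle$ is the free associative unital algebra over $\mathbb C$ on two noncommuting variables $u,v$, graded by total degree. The dihedral group $D_{2n}$ (here $n=3$) acts on $\mathbb{C}\langle u,v\rangle$ by algebra automorphisms determined by $\rho(u)=\xi u$, $\rho(v)=\xi^{-1}v$, $\tau(u)=v$, $\tau(v)=u$, where $\xi=e^{2\pi i/n}$ and $\rho,\tau$ are the generators of $D_{2n}=\langle\rho,\tau\mid \rho^n=\tau^2=(\tau\rho)^2=1\rangle$. The Hilbert series of a graded subalgebra $F$ is $\sum_{k\ge0}\dim F^{(k)}t^k$, $F^{(k)}$ being its homogeneous component of degree $k$. *)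

theory Defs
  imports Complex_Main "HOL-Number_Theory.Fib" "HOL-Library.Function_Algebras"
    "HOL-Computational_Algebra.Formal_Power_Series"
begin

text \<open>Elements of the free algebra C<u,v> are finitely supported coefficient functions
  on words; a word is a bool list with False = u and True = v.\<close>

type_synonym ncpoly = "bool list \<Rightarrow> complex"

definition nc_elems :: "ncpoly set" where
  "nc_elems = {p. finite {w. p w \<noteq> 0}}"

definition nc_scale :: "complex \<Rightarrow> ncpoly \<Rightarrow> ncpoly" where
  "nc_scale c p = (\<lambda>w. c * p w)"

definition nc_one :: ncpoly where
  "nc_one = (\<lambda>w. if w = [] then 1 else 0)"

definition nc_mult :: "ncpoly \<Rightarrow> ncpoly \<Rightarrow> ncpoly" where
  "nc_mult p q = (\<lambda>w. \<Sum>i\<le>length w. p (take i w) * q (drop i w))"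

definition nc_prod :: "ncpoly list \<Rightarrow> ncpoly" where
  "nc_prod ys = foldr nc_mult ys nc_one"

text \<open>Homogeneous of degree d (the zero polynomial is homogeneous of every degree).\<close>
definition nc_homog :: "nat \<Rightarrow> ncpoly \<Rightarrow> bool" where
  "nc_homog d p \<longleftrightarrow> p \<in> nc_elems \<and> (\<forall>w. p w \<noteq> 0 \<longrightarrow> length w = d)"

text \<open>The generators of D_{2n}: rho(u) = xi u, rho(v) = xi^{-1} v, tau swaps u and v,
  extended to algebra automorphisms; on coefficient functions.\<close>
definition dih_xi :: "nat \<Rightarrow> complex" where
  "dih_xi n = cis (2 * pi / real n)"

definition dih_rho :: "nat \<Rightarrow> ncpoly \<Rightarrow> ncpoly" where
  "dih_rho n p = (\<lambda>w. dih_xi n powi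
      (int (length (filter Not w)) - int (length (filter id w))) * p w)"

definition dih_tau :: "ncpoly \<Rightarrow> ncpoly" where
  "dih_tau p = (\<lambda>w. p (map Not w))"

text \<open>Invariant algebra C<u,v>^{D_{2n}}: elements fixed by the generators rho, tau
  (hence by the whole group they generate).\<close>
definition dih_invariants :: "nat \<Rightarrow> ncpoly set" where
  "dih_invariants n = {p \<in> nc_elems. dih_rho n p = p \<and> dih_tau p = p}"

definition inv_hdim :: "nat \<Rightarrow> nat \<Rightarrow> nat" where
  "inv_hdim n k = vector_space.dim nc_scale {p \<in> dih_invariants n. nc_homog k p}"

definition inv_hilbert_series :: "nat \<Rightarrow> complex fps" where
  "inv_hilbert_series n = Abs_fps (\<lambda>k. of_nat (inv_hdim n k))"

text \<open>Y is a set of homogeneous elements freely generating the subalgebra F: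
  the canonical algebra map from the free algebra on Y (whose basis consists of the
  words over Y) to C<u,v> is injective with image F, i.e. the products of finite
  sequences of elements of Y are pairwise distinct for distinct sequences,
  linearly independent, and span F.\<close>
definition free_homog_generators :: "ncpoly set \<Rightarrow> ncpoly set \<Rightarrow> bool" where
  "free_homog_generators Y F \<longleftrightarrow>
     Y \<subseteq> F \<and> (\<forall>y\<in>Y. \<exists>d. nc_homog d y) \<and>
     inj_on nc_prod (lists Y) \<and>
     \<not> module.dependent nc_scale (nc_prod ` lists Y) \<and>
     module.span nc_scale (nc_prod ` lists Y) = F"

end

theory Submission imports Defs begin

unbundle fps_syntax

interpretation nc: vector_space nc_scale
  by unfold_locales (auto simp: nc_scale_def fun_eq_iff algebra_simps)

definition wt :: "bool list \<Rightarrow> int" where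
  "wt w = int (length (filter Not w)) - int (length (filter id w))"

lemma wt_simps[simp]: "wt [] = 0" "wt (False # w) = wt w + 1" "wt (True # w) = wt w - 1"
  "wt (a @ b) = wt a + wt b"
  by (auto simp: wt_def)

lemma wt_map_Not[simp]: "wt (map Not w) = - wt w"
  by (induction w) (auto simp: wt_def)

lemma xi3: "dih_xi 3 ^ 3 = 1"
proof -
  have "dih_xi 3 ^ 3 = cis (real 3 * (2 * pi / real 3))"
    unfolding dih_xi_def by (rule DeMoivre)
  also have "\<dots> = 1" by simp
  finally show ?thesis .
qed

lemma xi_ne1: "dih_xi 3 \<noteq> 1"
proof
  assume "dih_xi 3 = 1"
  then have "Im (dih_xi 3) = 0" by simp
  moreover have "sin (2 * pi / 3) > 0" by (rule sin_gt_zero) auto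
  ultimately show False by (simp add: dih_xi_def)
qed

lemma xi_ne0: "dih_xi 3 \<noteq> 0"
  using xi3 by auto

lemma xi_powi: "dih_xi 3 powi j = 1 \<longleftrightarrow> j mod 3 = 0"
proof -
  define x where "x = dih_xi 3"
  have j: "j = 3 * (j div 3) + j mod 3" by simp
  have "x powi j = x powi (3 * (j div 3)) * x powi (j mod 3)"
    using xi_ne0 unfolding x_def by (subst j, subst power_int_add) auto
  also have "x powi (3 * (j div 3)) = (x powi 3) powi (j div 3)"
    by (rule power_int_mult)
  also have "x powi 3 = 1" using xi3 unfolding x_def by simp
  finally have eq: "x powi j = x powi (j mod 3)" by simp
  have "j mod 3 \<in> {0,1,2}" by auto
  moreover have "x ^ 2 \<noteq> 1"
  proof
    assume "x ^ 2 = 1"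
    then have "x ^ 3 = x" by (simp add: power3_eq_cube power2_eq_square)
    then show False using xi3 xi_ne1 unfolding x_def by simp
  qed
  moreover have "x \<noteq> 1" using xi_ne1 unfolding x_def by simp
  ultimately show ?thesis unfolding x_def[symmetric] eq by auto
qed

lemma rho_inv_iff: "dih_rho 3 p = p \<longleftrightarrow> (\<forall>w. p w \<noteq> 0 \<longrightarrow> wt w mod 3 = 0)"
proof -
  have "dih_rho 3 p = p \<longleftrightarrow> (\<forall>w. dih_xi 3 powi wt w * p w = p w)"
    by (auto simp: dih_rho_def wt_def fun_eq_iff)
  also have "\<dots> \<longleftrightarrow> (\<forall>w. p w \<noteq> 0 \<longrightarrow> wt w mod 3 = 0)"
    using xi_powi by (metis mult_cancel_right2)
  finally show ?thesis .
qed

lemma F_iff: "p \<in> dih_invariants 3 \<longleftrightarrow> p \<in> nc_elems \<and> (\<forall>w. p w \<noteq> 0 \<longrightarrow> wt w mod 3 = 0)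
   \<and> (\<forall>w. p (map Not w) = p w)"
proof -
  have tau: "dih_tau p = p \<longleftrightarrow> (\<forall>w. p (map Not w) = p w)"
    by (simp add: dih_tau_def fun_eq_iff)
  show ?thesis unfolding dih_invariants_def by (simp add: rho_inv_iff tau)
qed

lemma F_add:
  assumes "x \<in> dih_invariants 3" "y \<in> dih_invariants 3"
  shows "x + y \<in> dih_invariants 3"
proof -
  have hx: "finite {w. x w \<noteq> 0}" "\<forall>w. x w \<noteq> 0 \<longrightarrow> wt w mod 3 = 0" "\<forall>w. x (map Not w) = x w"
    using assms(1) by (auto simp: F_iff nc_elems_def)
  have hy: "finite {w. y w \<noteq> 0}" "\<forall>w. y w \<noteq> 0 \<longrightarrow> wt w mod 3 = 0" "\<forall>w. y (map Not w) = y w"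
    using assms(2) by (auto simp: F_iff nc_elems_def)
  have "finite {w. (x + y) w \<noteq> 0}"
    by (rule rev_finite_subset[OF finite_UnI[OF hx(1) hy(1)]]) auto
  moreover have "wt w mod 3 = 0" if "(x + y) w \<noteq> 0" for w
    using that hx(2) hy(2) by (cases "x w = 0") auto
  moreover have "(x + y) (map Not w) = (x + y) w" for w using hx(3) hy(3) by simp
  ultimately show ?thesis by (simp add: F_iff nc_elems_def)
qed

lemma F_scale:
  assumes "x \<in> dih_invariants 3"
  shows "nc_scale c x \<in> dih_invariants 3"
proof -
  have hx: "finite {w. x w \<noteq> 0}" "\<forall>w. x w \<noteq> 0 \<longrightarrow> wt w mod 3 = 0" "\<forall>w. x (map Not w) = x w"
    using assms(1) by (auto simp: F_iff nc_elems_def)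
  have "finite {w. nc_scale c x w \<noteq> 0}"
    by (rule rev_finite_subset[OF hx(1)]) (auto simp: nc_scale_def)
  then show ?thesis using hx by (auto simp: F_iff nc_elems_def nc_scale_def)
qed

lemma F_subspace: "nc.subspace (dih_invariants 3)"
  unfolding nc.subspace_def
proof (intro conjI ballI allI)
  show "0 \<in> dih_invariants 3" by (simp add: F_iff nc_elems_def)
qed (simp_all add: F_add F_scale)


lemma nc_mult_homog_left:
  assumes "\<forall>w. p w \<noteq> 0 \<longrightarrow> length w = n"
  shows "nc_mult p q w = (if n \<le> length w then p (take n w) * q (drop n w) else 0)"
proof -
  have "nc_mult p q w = (\<Sum>i\<le>length w. if i = n then p (take i w) * q (drop i w) else 0)"
    unfolding nc_mult_def
  proof (rule sum.cong)
    fix i assume "i \<in> {..length w}"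
    then have "length (take i w) = i" by simp
    then show "p (take i w) * q (drop i w) = (if i = n then p (take i w) * q (drop i w) else 0)"
      using assms by auto
  qed simp
  also have "\<dots> = (if n \<le> length w then p (take n w) * q (drop n w) else 0)"
    by (auto simp: sum.delta)
  finally show ?thesis .
qed

lemma nc_homog_mult:
  assumes "nc_homog a p" "nc_homog b q"
  shows "nc_homog (a + b) (nc_mult p q)"
proof -
  have pa: "\<forall>w. p w \<noteq> 0 \<longrightarrow> length w = a" and pf: "finite {w. p w \<noteq> 0}"
    using assms(1) by (auto simp: nc_homog_def nc_elems_def)
  have qb: "\<forall>w. q w \<noteq> 0 \<longrightarrow> length w = b" and qf: "finite {w. q w \<noteq> 0}"
    using assms(2) by (auto simp: nc_homog_def nc_elems_def)
  have eq: "nc_mult p q w = (if a \<le> length w then p (take a w) * q (drop a w) else 0)" for w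
    by (rule nc_mult_homog_left[OF pa])
  have sub: "{w. nc_mult p q w \<noteq> 0} \<subseteq> (\<lambda>(x, y). x @ y) ` ({w. p w \<noteq> 0} \<times> {w. q w \<noteq> 0})"
  proof
    fix w assume "w \<in> {w. nc_mult p q w \<noteq> 0}"
    then have "a \<le> length w" "p (take a w) \<noteq> 0" "q (drop a w) \<noteq> 0"
      by (auto simp: eq split: if_splits)
    then show "w \<in> (\<lambda>(x, y). x @ y) ` ({w. p w \<noteq> 0} \<times> {w. q w \<noteq> 0})"
      by (intro image_eqI[of _ _ "(take a w, drop a w)"]) auto
  qed
  have "finite {w. nc_mult p q w \<noteq> 0}"
    by (rule finite_subset[OF sub]) (use pf qf in auto)
  moreover have "length w = a + b" if "nc_mult p q w \<noteq> 0" for w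
  proof -
    have "a \<le> length w" "q (drop a w) \<noteq> 0"
      using that by (auto simp: eq split: if_splits)
    then show ?thesis using qb by fastforce
  qed
  ultimately show ?thesis by (auto simp: nc_homog_def nc_elems_def)
qed

lemma nc_homog_one: "nc_homog 0 nc_one"
  by (auto simp: nc_homog_def nc_elems_def nc_one_def)

lemma nc_mult_one_right: "nc_mult p nc_one = p"
proof
  fix w
  have "nc_mult p nc_one w = (\<Sum>i\<le>length w. if i = length w then p (take i w) else 0)"
    unfolding nc_mult_def by (rule sum.cong) (auto simp: nc_one_def)
  then show "nc_mult p nc_one w = p w" by (simp add: sum.delta)
qed

lemma nc_prod_Nil[simp]: "nc_prod [] = nc_one" and nc_prod_Cons[simp]: "nc_prod (y # ys) = nc_mult y (nc_prod ys)"
  by (simp_all add: nc_prod_def)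

lemma nc_prod_single: "nc_prod [y] = y"
  by (simp add: nc_mult_one_right)

lemma nc_prod_homog:
  assumes "\<forall>y\<in>set ys. nc_homog (dg y) y"
  shows "nc_homog (sum_list (map dg ys)) (nc_prod ys)"
  using assms by (induction ys) (auto simp: nc_homog_one intro: nc_homog_mult)

lemma nc_homog_unique: "nc_homog a p \<Longrightarrow> nc_homog b p \<Longrightarrow> p \<noteq> 0 \<Longrightarrow> a = b"
  by (auto simp: nc_homog_def fun_eq_iff)


lemma sum_fun_apply: "(\<Sum>a\<in>A. (f a :: 'x \<Rightarrow> 'y::comm_monoid_add)) x = (\<Sum>a\<in>A. f a x)"
  by (induction A rule: infinite_finite_induct) auto

definition hdeg :: "ncpoly \<Rightarrow> nat" where
  "hdeg y = (SOME d. nc_homog d y)"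

lemma hdeg: "\<exists>d. nc_homog d y \<Longrightarrow> nc_homog (hdeg y) y"
  unfolding hdeg_def by (rule someI_ex)

definition ew :: "bool list \<Rightarrow> ncpoly" where
  "ew w = (\<lambda>v. if v = w then 1 else 0)"

lemma homog_in_span_ew:
  assumes "nc_homog k p"
  shows "p \<in> nc.span (ew ` {w. length w = k})"
proof -
  have fin: "finite {w :: bool list. length w = k}"
    using finite_lists_length_eq[of "UNIV :: bool set" k] by simp
  have "p = (\<Sum>w\<in>{w. length w = k}. nc_scale (p w) (ew w))"
  proof
    fix v
    have "(\<Sum>w\<in>{w. length w = k}. nc_scale (p w) (ew w)) v = (\<Sum>w\<in>{w. length w = k}. if w = v then p v else 0)"
      unfolding sum_fun_apply by (rule sum.cong) (auto simp: nc_scale_def ew_def)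
    also have "\<dots> = p v"
      using assms fin by (auto simp: sum.delta' nc_homog_def)
    finally show "p v = (\<Sum>w\<in>{w. length w = k}. nc_scale (p w) (ew w)) v" by simp
  qed
  also have "\<dots> \<in> nc.span (ew ` {w. length w = k})"
    by (intro nc.span_sum nc.span_scale nc.span_base) auto
  finally show ?thesis .
qed

definition proj :: "nat \<Rightarrow> ncpoly \<Rightarrow> ncpoly" where
  "proj k p = (\<lambda>w. if length w = k then p w else 0)"

lemma proj_sum: "proj k (\<Sum>v\<in>T. nc_scale (c v) v) = (\<Sum>v\<in>T. nc_scale (c v) (proj k v))"
  by (auto simp: fun_eq_iff proj_def sum_fun_apply nc_scale_def)

lemma GL:
  assumes Y: "free_homog_generators Y (dih_invariants 3)"
  shows "finite {ys \<in> lists Y. sum_list (map hdeg ys) = k}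
    \<and> inv_hdim 3 k = card {ys \<in> lists Y. sum_list (map hdeg ys) = k}"
proof -
  define F where "F = dih_invariants 3"
  define Fk where "Fk = {p \<in> F. nc_homog k p}"
  define Lk where "Lk = {ys \<in> lists Y. sum_list (map hdeg ys) = k}"
  define Bk where "Bk = nc_prod ` Lk"
  have YF: "Y \<subseteq> F" and Yh: "\<forall>y\<in>Y. \<exists>d. nc_homog d y" and inj: "inj_on nc_prod (lists Y)"
    and ind: "\<not> nc.dependent (nc_prod ` lists Y)" and sp: "nc.span (nc_prod ` lists Y) = F"
    using Y by (auto simp: free_homog_generators_def F_def)
  have hom: "nc_homog (sum_list (map hdeg ys)) (nc_prod ys)" if "ys \<in> lists Y" for ys
    using that Yh by (intro nc_prod_homog) (auto intro: hdeg)
  have BF: "Bk \<subseteq> Fk"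
  proof
    fix b assume "b \<in> Bk"
    then obtain ys where ys: "ys \<in> Lk" "b = nc_prod ys" by (auto simp: Bk_def)
    then have "b \<in> F" using sp nc.span_base[of b "nc_prod ` lists Y"] by (auto simp: Lk_def)
    moreover have "nc_homog k b" using ys hom by (auto simp: Lk_def)
    ultimately show "b \<in> Fk" by (simp add: Fk_def)
  qed
  have indB: "\<not> nc.dependent Bk"
    using ind by (rule nc.independent_mono) (auto simp: Bk_def Lk_def)
  have fin: "finite (ew ` {w :: bool list. length w = k})"
    using finite_lists_length_eq[of "UNIV :: bool set" k] by simp
  have "Bk \<subseteq> nc.span (ew ` {w. length w = k})"
    using BF homog_in_span_ew by (auto simp: Fk_def)
  then have finB: "finite Bk"
    using nc.independent_span_bound[OF fin indB] by auto
  have FB: "Fk \<subseteq> nc.span Bk"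
  proof
    fix p assume p: "p \<in> Fk"
    then have "p \<in> nc.span (nc_prod ` lists Y)" using sp by (simp add: Fk_def)
    then obtain T c where T: "finite T" "T \<subseteq> nc_prod ` lists Y" and pT: "p = (\<Sum>v\<in>T. nc_scale (c v) v)"
      unfolding nc.span_explicit by blast
    have "p = proj k p"
      using p by (auto simp: proj_def fun_eq_iff Fk_def nc_homog_def)
    also have "\<dots> = (\<Sum>v\<in>T. nc_scale (c v) (proj k v))"
      unfolding pT by (rule proj_sum)
    also have "\<dots> \<in> nc.span Bk"
    proof (rule nc.span_sum)
      fix v assume "v \<in> T"
      then obtain ys where ys: "ys \<in> lists Y" "v = nc_prod ys" using T by auto
      show "nc_scale (c v) (proj k v) \<in> nc.span Bk"
      proof (cases "sum_list (map hdeg ys) = k")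
        case True
        then have "v \<in> Bk" using ys by (auto simp: Bk_def Lk_def)
        moreover have "proj k v = v" using hom[OF ys(1)] True ys(2)
          by (auto simp: proj_def fun_eq_iff nc_homog_def)
        ultimately show ?thesis by (simp add: nc.span_base nc.span_scale)
      next
        case False
        have "proj k v = 0" using hom[OF ys(1)] False ys(2)
          by (auto simp: proj_def fun_eq_iff nc_homog_def)
        then have "nc_scale (c v) (proj k v) = 0" by (simp add: nc_scale_def fun_eq_iff)
        then show ?thesis using nc.span_zero by metis
      qed
    qed
    finally show "p \<in> nc.span Bk" .
  qed
  have "nc.span Fk = nc.span Bk"
    using BF FB by (metis nc.span_mono nc.span_span subset_antisym)
  then have "nc.dim Fk = nc.dim Bk" by (metis nc.dim_span)
  also have "\<dots> = card Bk" using indB by (rule nc.dim_eq_card_independent)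
  also have "\<dots> = card Lk" unfolding Bk_def
    by (rule card_image) (rule inj_on_subset[OF inj], auto simp: Lk_def)
  finally have "nc.dim Fk = card Lk" .
  moreover have "finite Lk" using finB inj unfolding Bk_def
    by (metis (no_types, lifting) finite_imageD inj_on_subset mem_Collect_eq subsetI Lk_def)
  ultimately show ?thesis by (simp add: inv_hdim_def Fk_def F_def Lk_def)
qed


fun bval :: "bool list \<Rightarrow> nat" where
  "bval [] = 0"
| "bval (x # xs) = (if x then 2 ^ length xs else 0) + bval xs"

lemma bval_lt: "bval xs < 2 ^ length xs"
  by (induction xs) auto

lemma bval_append: "bval (a @ b) = bval a * 2 ^ length b + bval b"
  by (induction a) (auto simp: power_add algebra_simps)

lemma bval_inj: "length a = length b \<Longrightarrow> bval a = bval b \<Longrightarrow> a = b"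
proof (induction a arbitrary: b)
  case Nil then show ?case by simp
next
  case (Cons x a)
  then obtain y b' where b: "b = y # b'" by (cases b) auto
  have l: "length a = length b'" using Cons b by simp
  have "x = y"
    using Cons.prems bval_lt[of a] bval_lt[of b'] l b by (auto split: if_splits)
  then show ?case using Cons l b by auto
qed

definition key :: "bool list \<Rightarrow> nat" where
  "key w = 2 ^ length w + bval w"

lemma key_len: "length a < length b \<Longrightarrow> key a < key b"
proof -
  assume "length a < length b"
  then have "2 ^ Suc (length a) \<le> (2::nat) ^ length b" by (intro power_increasing) auto
  then show "key a < key b" using bval_lt[of a] by (auto simp: key_def)
qed

lemma key_inj: "key a = key b \<Longrightarrow> a = b"
proof -
  assume k: "key a = key b"
  have "length a = length b"
    using key_len[of a b] key_len[of b a] k by (cases "length a < length b"; cases "length b < length a") auto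
  then show "a = b" using k bval_inj by (auto simp: key_def)
qed

lemma key_le: "length a = length b \<Longrightarrow> bval a \<le> bval b \<Longrightarrow> key a \<le> key b"
  by (auto simp: key_def)

lemma bval_Not_lt: "xs \<noteq> [] \<Longrightarrow> hd xs \<Longrightarrow> bval (map Not xs) < bval xs"
  by (cases xs) (auto intro: less_le_trans[OF bval_lt])

definition V' :: "bool list set" where
  "V' = {w. wt w mod 3 = 0 \<and> (w = [] \<or> hd w)}"

definition C :: "bool list set" where
  "C = {g. g \<noteq> [] \<and> g \<in> V' \<and> \<not> (\<exists>a b. a \<noteq> [] \<and> b \<noteq> [] \<and> a \<in> V' \<and> b \<in> V' \<and> g = a @ b)}"

lemma int_mod3_add: "(x::int) mod 3 = 0 \<Longrightarrow> y mod 3 = 0 \<Longrightarrow> (x + y) mod 3 = 0"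
  by presburger

lemma int_mod3_cancel: "((x::int) + y) mod 3 = 0 \<Longrightarrow> x mod 3 = 0 \<Longrightarrow> y mod 3 = 0"
  by presburger

lemma wt_app_mod: "wt a mod 3 = 0 \<Longrightarrow> wt b mod 3 = 0 \<Longrightarrow> wt (a @ b) mod 3 = 0"
  by (simp add: int_mod3_add)

lemma V'_append: "a \<in> V' \<Longrightarrow> b \<in> V' \<Longrightarrow> a @ b \<in> V'"
  using wt_app_mod[of a b] by (cases a) (auto simp: V'_def)

lemma concat_C: "gs \<in> lists C \<Longrightarrow> concat gs \<in> V'"
  by (induction gs) (auto simp: C_def V'_def intro: V'_append[unfolded V'_def, simplified])

lemma factor_exists: "w \<in> V' \<Longrightarrow> \<exists>gs\<in>lists C. concat gs = w"
proof (induction "length w" arbitrary: w rule: less_induct)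
  case less
  show ?case
  proof (cases "w = []")
    case True then show ?thesis by (intro bexI[of _ "[]"]) auto
  next
    case False
    show ?thesis
    proof (cases "w \<in> C")
      case True then show ?thesis by (intro bexI[of _ "[w]"]) auto
    next
      case nC: False
      then obtain a b where ab: "a \<noteq> []" "b \<noteq> []" "a \<in> V'" "b \<in> V'" "w = a @ b"
        using False less.prems by (auto simp: C_def)
      obtain gs where gs: "gs \<in> lists C" "concat gs = a" using less(1)[of a] ab by auto
      obtain hs where hs: "hs \<in> lists C" "concat hs = b" using less(1)[of b] ab by auto
      show ?thesis using gs hs ab by (intro bexI[of _ "gs @ hs"]) auto
    qed
  qed
qed

lemma concat_Nil_C: "hs \<in> lists C \<Longrightarrow> concat hs = [] \<Longrightarrow> hs = []"
  by (cases hs) (auto simp: C_def)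

lemma prefix_V':
  assumes "gs \<in> lists C" "us @ r = concat gs" "us \<noteq> []" "wt us mod 3 = 0"
  shows "us \<in> V'"
proof -
  obtain g gs' where g: "gs = g # gs'" using assms by (cases gs) auto
  have "g \<noteq> []" "hd g" using assms g by (auto simp: C_def V'_def)
  then have "hd (concat gs) = True" using g by simp
  then have "hd us" using assms by (metis hd_append2)
  then show ?thesis using assms by (auto simp: V'_def)
qed

lemma C_facts: "g \<in> C \<Longrightarrow> g \<noteq> [] \<and> hd g \<and> wt g mod 3 = 0"
  by (auto simp: C_def V'_def)

lemma C_nosplit: "g \<in> C \<Longrightarrow> a \<noteq> [] \<Longrightarrow> b \<noteq> [] \<Longrightarrow> a \<in> V' \<Longrightarrow> b \<in> V' \<Longrightarrow> g \<noteq> a @ b"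
  unfolding C_def by blast

lemma C_V': "g \<in> C \<Longrightarrow> g \<in> V'"
  unfolding C_def by blast

lemma factor_unique: "gs \<in> lists C \<Longrightarrow> hs \<in> lists C \<Longrightarrow> concat gs = concat hs \<Longrightarrow> gs = hs"
proof (induction gs arbitrary: hs)
  case Nil then show ?case using concat_Nil_C by auto
next
  case (Cons g gs)
  have "hs \<noteq> []" using Cons.prems C_facts[of g] by auto
  then obtain h hs' where h: "hs = h # hs'" by (cases hs) auto
  have gC: "g \<in> C" and hC: "h \<in> C" and gsC: "gs \<in> lists C" and hsC: "hs' \<in> lists C"
    using Cons.prems h by auto
  have eq: "g @ concat gs = h @ concat hs'" using Cons.prems h by simp
  have "g = h"
  proof (rule ccontr)
    assume ne: "g \<noteq> h"
    from eq obtain us where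
      "(g = h @ us \<and> us @ concat gs = concat hs') \<or> (g @ us = h \<and> concat gs = us @ concat hs')"
      using append_eq_append_conv2[of g "concat gs" h "concat hs'"] by blast
    then show False
    proof
      assume a: "g = h @ us \<and> us @ concat gs = concat hs'"
      then have u: "us \<noteq> []" using ne by (metis append_Nil2)
      have "wt g = wt h + wt us" using a by simp
      then have "wt us mod 3 = 0" using C_facts[OF gC] C_facts[OF hC] int_mod3_cancel[of "wt h" "wt us"] by simp
      then have "us \<in> V'" using prefix_V'[OF hsC conjunct2[OF a] u] by simp
      then show False using C_nosplit[OF gC _ u C_V'[OF hC]] a C_facts[OF hC] by blast
    next
      assume a: "g @ us = h \<and> concat gs = us @ concat hs'"
      then have u: "us \<noteq> []" using ne by (metis append_Nil2)
      have "wt h = wt g + wt us" using a by (metis wt_simps(4))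
      then have "wt us mod 3 = 0" using C_facts[OF gC] C_facts[OF hC] int_mod3_cancel[of "wt g" "wt us"] by simp
      moreover have "us @ concat hs' = concat gs" using a by simp
      ultimately have "us \<in> V'" using prefix_V'[OF gsC _ u] by simp
      then show False using C_nosplit[OF hC _ u C_V'[OF gC]] a C_facts[OF gC] by blast
    qed
  qed
  then have "gs = hs'" using Cons.IH[OF gsC hsC] eq by simp
  then show ?case using h \<open>g = h\<close> by simp
qed


fun inCh :: "bool list list \<Rightarrow> bool list \<Rightarrow> bool" where
  "inCh [] w = (w = [])"
| "inCh (g # gs) w = (length g \<le> length w \<and> (take (length g) w = g \<or> take (length g) w = map Not g)
      \<and> inCh gs (drop (length g) w))"

definition E :: "bool list \<Rightarrow> ncpoly" where
  "E g = (\<lambda>w. if w = g \<or> w = map Not g then 1 else 0)"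

lemma nc_prod_E: "nc_prod (map E gs) = (\<lambda>w. if inCh gs w then 1 else 0)"
proof (induction gs)
  case Nil then show ?case by (auto simp: nc_one_def)
next
  case (Cons g gs)
  have sup: "\<forall>w. E g w \<noteq> 0 \<longrightarrow> length w = length g" by (auto simp: E_def)
  have "nc_prod (map E (g # gs)) = nc_mult (E g) (nc_prod (map E gs))" by simp
  also have "\<dots> = (\<lambda>w. if length g \<le> length w then E g (take (length g) w) *
      (if inCh gs (drop (length g) w) then 1 else 0) else 0)"
    by (simp add: fun_eq_iff nc_mult_homog_left[OF sup] Cons.IH)
  also have "\<dots> = (\<lambda>w. if inCh (g # gs) w then 1 else 0)"
    by (auto simp: fun_eq_iff E_def)
  finally show ?case .
qed

lemma inCh_length: "inCh gs w \<Longrightarrow> length w = length (concat gs)"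
proof (induction gs arbitrary: w)
  case (Cons g gs)
  then have "length (drop (length g) w) = length (concat gs)" using Cons.IH[of "drop (length g) w"] by simp
  moreover have "length g \<le> length w" using Cons.prems by simp
  ultimately show ?case by simp
qed simp

lemma inCh_concat: "inCh gs (concat gs)"
  by (induction gs) auto

lemma inCh_Not: "inCh gs w \<Longrightarrow> inCh gs (map Not w)"
proof (induction gs arbitrary: w)
  case (Cons g gs)
  have i: "inCh gs (map Not (drop (length g) w))" using Cons by simp
  have "map Not (take (length g) w) = map Not g \<or> map Not (take (length g) w) = g"
    using Cons.prems by (auto simp: comp_def)
  then show ?case using Cons.prems i by (auto simp: take_map drop_map)
qed simp

lemma inCh_wt: "inCh gs w \<Longrightarrow> \<forall>g\<in>set gs. wt g mod 3 = 0 \<Longrightarrow> wt w mod 3 = 0"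
proof (induction gs arbitrary: w)
  case Nil then show ?case by simp
next
  case (Cons g gs)
  let ?n = "length g"
  have w: "w = take ?n w @ drop ?n w" by simp
  have "wt (take ?n w) mod 3 = 0"
  proof -
    have "take ?n w = g \<or> take ?n w = map Not g" using Cons.prems by simp
    moreover have "wt g mod 3 = 0" using Cons.prems by simp
    ultimately show ?thesis by (auto simp: zmod_zminus1_eq_if)
  qed
  moreover have "wt (drop ?n w) mod 3 = 0" using Cons by simp
  ultimately show ?case using wt_app_mod w by metis
qed

lemma inCh_bval: "inCh gs w \<Longrightarrow> \<forall>g\<in>set gs. g \<noteq> [] \<and> hd g \<Longrightarrow> bval w \<le> bval (concat gs)"
proof (induction gs arbitrary: w)
  case Nil then show ?case by simp
next
  case (Cons g gs)
  let ?n = "length g"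
  have w: "w = take ?n w @ drop ?n w" by simp
  have l: "length (drop ?n w) = length (concat gs)" using Cons.prems inCh_length[of gs "drop ?n w"] by simp
  have t: "bval (take ?n w) \<le> bval g"
  proof -
    have "take ?n w = g \<or> take ?n w = map Not g" using Cons.prems by simp
    moreover have "bval (map Not g) < bval g" using Cons.prems by (intro bval_Not_lt) auto
    ultimately show ?thesis by auto
  qed
  have d: "bval (drop ?n w) \<le> bval (concat gs)" using Cons by simp
  have "bval w = bval (take ?n w) * 2 ^ length (concat gs) + bval (drop ?n w)"
    using bval_append[of "take ?n w" "drop ?n w"] w l by simp
  also have "\<dots> \<le> bval g * 2 ^ length (concat gs) + bval (concat gs)"
    using t d by (intro add_mono mult_right_mono) auto
  also have "\<dots> = bval (concat (g # gs))" by (simp add: bval_append)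
  finally show ?case .
qed

lemma inCh_key: "gs \<in> lists C \<Longrightarrow> inCh gs w \<Longrightarrow> key w \<le> key (concat gs)"
  by (intro key_le inCh_length inCh_bval) (auto dest: C_facts)

lemma ind_in_F:
  assumes "finite {w. P w}" "\<forall>w. P w \<longrightarrow> wt w mod 3 = 0" "\<forall>w. P (map Not w) = P w"
  shows "(\<lambda>w. if P w then 1 else 0) \<in> dih_invariants 3"
  using assms by (auto simp: F_iff nc_elems_def)

lemma prod_in_F:
  assumes "gs \<in> lists C"
  shows "nc_prod (map E gs) \<in> dih_invariants 3"
  unfolding nc_prod_E
proof (rule ind_in_F)
  show "finite {w. inCh gs w}"
    by (rule finite_subset[of _ "{w. set w \<subseteq> UNIV \<and> length w = length (concat gs)}"])
       (use finite_lists_length_eq[of "UNIV :: bool set" "length (concat gs)"] in \<open>auto simp: inCh_length\<close>)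
  show "\<forall>w. inCh gs w \<longrightarrow> wt w mod 3 = 0"
    using assms inCh_wt[of gs] C_facts by auto
  show "\<forall>w. inCh gs (map Not w) = inCh gs w"
  proof
    fix w
    have mm: "map Not (map Not w) = w" by (simp add: comp_def)
    show "inCh gs (map Not w) = inCh gs w"
      using inCh_Not[of gs w] inCh_Not[of gs "map Not w"] mm by auto
  qed
qed

lemma E_facts: "g \<in> C \<Longrightarrow> E g \<in> dih_invariants 3 \<and> nc_homog (length g) (E g) \<and> E g \<noteq> 0"
proof -
  assume g: "g \<in> C"
  have "E g = nc_prod (map E [g])" by (simp add: nc_mult_one_right)
  then have "E g \<in> dih_invariants 3" using prod_in_F[of "[g]"] g by simp
  moreover have "nc_homog (length g) (E g)"
    by (auto simp: nc_homog_def nc_elems_def E_def)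
  moreover have "E g g \<noteq> 0" by (simp add: E_def)
  then have "E g \<noteq> 0" by auto
  ultimately show ?thesis by simp
qed

lemma E_inj: "inj_on E C"
proof
  fix g h assume g: "g \<in> C" and h: "h \<in> C" and eq: "E g = E h"
  have "E h g = 1" using fun_cong[OF eq, of g] by (simp add: E_def)
  then have "g = h \<or> g = map Not h" by (auto simp: E_def split: if_splits)
  moreover have "g \<noteq> map Not h" using C_facts[OF g] C_facts[OF h] by (cases h) auto
  ultimately show "g = h" by simp
qed


definition Y0 :: "ncpoly set" where "Y0 = E ` C"

lemma lists_Y0: "ys \<in> lists Y0 \<longleftrightarrow> (\<exists>gs\<in>lists C. ys = map E gs)"
  unfolding Y0_def lists_image by auto

lemma Y0_inj: "inj_on nc_prod (lists Y0)"
proof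
  fix xs ys assume xs: "xs \<in> lists Y0" and ys: "ys \<in> lists Y0" and eq: "nc_prod xs = nc_prod ys"
  obtain gs where gs: "gs \<in> lists C" "xs = map E gs" using xs lists_Y0 by auto
  obtain hs where hs: "hs \<in> lists C" "ys = map E hs" using ys lists_Y0 by auto
  have ch: "inCh gs w = inCh hs w" for w
    using fun_cong[OF eq, of w] gs hs by (auto simp: nc_prod_E split: if_splits)
  have "key (concat gs) \<le> key (concat hs)"
    using inCh_key[OF hs(1)] ch inCh_concat by metis
  moreover have "key (concat hs) \<le> key (concat gs)"
    using inCh_key[OF gs(1)] ch inCh_concat by metis
  ultimately have "concat gs = concat hs" using key_inj by (metis antisym)
  then have "gs = hs" using factor_unique gs hs by blast
  then show "xs = ys" using gs hs by simp
qed

definition lw :: "ncpoly \<Rightarrow> bool list" where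
  "lw v = concat (SOME gs. gs \<in> lists C \<and> v = nc_prod (map E gs))"

lemma lw: "gs \<in> lists C \<Longrightarrow> lw (nc_prod (map E gs)) = concat gs"
proof -
  assume gs: "gs \<in> lists C"
  define hs where "hs = (SOME hs. hs \<in> lists C \<and> nc_prod (map E gs) = nc_prod (map E hs))"
  have "hs \<in> lists C \<and> nc_prod (map E gs) = nc_prod (map E hs)"
    unfolding hs_def by (rule someI[of _ gs]) (use gs in simp)
  moreover have "map E gs \<in> lists Y0" "map E hs \<in> lists Y0"
    using gs \<open>hs \<in> lists C \<and> _\<close> lists_Y0 by auto
  ultimately have "map E hs = map E gs"
    using inj_onD[OF Y0_inj] by metis
  then have "hs = gs" using inj_on_map_lists[OF E_inj] gs \<open>hs \<in> lists C \<and> _\<close>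
    unfolding inj_on_def by blast
  then show ?thesis unfolding lw_def hs_def[symmetric] by simp
qed

lemma Y0_indep: "\<not> nc.dependent (nc_prod ` lists Y0)"
proof
  assume "nc.dependent (nc_prod ` lists Y0)"
  then obtain T u where T: "finite T" "T \<subseteq> nc_prod ` lists Y0"
    and s0: "(\<Sum>v\<in>T. nc_scale (u v) v) = 0" and ex: "\<exists>v\<in>T. u v \<noteq> 0"
    unfolding nc.dependent_explicit by blast
  define T' where "T' = {v\<in>T. u v \<noteq> 0}"
  have T'f: "finite T'" and T'ne: "T' \<noteq> {}" using T ex by (auto simp: T'_def)
  define m where "m = Max ((\<lambda>v. key (lw v)) ` T')"
  have "m \<in> (\<lambda>v. key (lw v)) ` T'" unfolding m_def using T'f T'ne by (intro Max_in) auto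
  then obtain vs where vs: "vs \<in> T'" "key (lw vs) = m" by auto
  have mx: "v \<in> T' \<Longrightarrow> key (lw v) \<le> m" for v
    unfolding m_def using T'f by (intro Max_ge) auto
  have repr: "\<exists>gs\<in>lists C. v = nc_prod (map E gs)" if vT: "v \<in> T" for v
  proof -
    obtain ys where "ys \<in> lists Y0" "v = nc_prod ys" using vT T(2) by auto
    then show ?thesis using lists_Y0 by auto
  qed
  obtain gs where gs: "gs \<in> lists C" "vs = nc_prod (map E gs)" using repr vs T'_def by auto
  define y where "y = concat gs"
  have lwy: "lw vs = y" using lw gs y_def by simp
  have other: "u v * v y = 0" if vT: "v \<in> T" "v \<noteq> vs" for v
  proof (rule ccontr)
    assume ne: "u v * v y \<noteq> 0"
    then have "v \<in> T'" using vT by (auto simp: T'_def)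
    obtain hs where hs: "hs \<in> lists C" "v = nc_prod (map E hs)" using repr vT by auto
    have "inCh hs y" using ne hs by (auto simp: nc_prod_E split: if_splits)
    then have "key y \<le> key (concat hs)" using inCh_key hs by blast
    moreover have "key (concat hs) \<le> key y"
      using mx[OF \<open>v \<in> T'\<close>] lw[OF hs(1)] hs(2) vs lwy by simp
    ultimately have "concat hs = y" using key_inj by (metis antisym)
    then have "hs = gs" using factor_unique hs gs y_def by blast
    then show False using vT hs gs by simp
  qed
  have "0 = (\<Sum>v\<in>T. nc_scale (u v) v) y" using s0 by simp
  also have "\<dots> = (\<Sum>v\<in>T. u v * v y)" by (simp add: sum_fun_apply nc_scale_def)
  also have "\<dots> = u vs * vs y + (\<Sum>v\<in>T - {vs}. u v * v y)"
    using vs T(1) by (subst sum.remove[of T vs]) (auto simp: T'_def)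
  also have "(\<Sum>v\<in>T - {vs}. u v * v y) = 0" using other by (intro sum.neutral) auto
  also have "vs y = 1" using gs inCh_concat by (simp add: nc_prod_E y_def)
  finally show False using vs by (simp add: T'_def)
qed


lemma prod_in_span: "gs \<in> lists C \<Longrightarrow> nc_prod (map E gs) \<in> nc.span (nc_prod ` lists Y0)"
proof -
  assume "gs \<in> lists C"
  then have "map E gs \<in> lists Y0" using lists_Y0 by blast
  then show ?thesis by (intro nc.span_base imageI)
qed

lemma span_all_aux:
  "p \<in> dih_invariants 3 \<Longrightarrow> (\<forall>w. p w \<noteq> 0 \<longrightarrow> key w < n) \<Longrightarrow> p \<in> nc.span (nc_prod ` lists Y0)"
proof (induction n arbitrary: p)
  case 0
  then have "p = 0" by (auto simp: fun_eq_iff)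
  then show ?case using nc.span_zero by metis
next
  case (Suc n)
  show ?case
  proof (cases "\<exists>y. p y \<noteq> 0 \<and> key y = n")
    case False
    then have "\<forall>w. p w \<noteq> 0 \<longrightarrow> key w < n" using Suc.prems by (metis less_SucE)
    then show ?thesis using Suc.IH Suc.prems by blast
  next
    case True
    then obtain y where y: "p y \<noteq> 0" "key y = n" by blast
    have pF: "\<forall>w. p w \<noteq> 0 \<longrightarrow> wt w mod 3 = 0" "\<forall>w. p (map Not w) = p w"
      using Suc.prems(1) by (auto simp: F_iff)
    have "y \<in> V'"
    proof -
      have "y = [] \<or> hd y"
      proof (rule ccontr)
        assume "\<not> (y = [] \<or> hd y)"
        then have ny: "y \<noteq> []" "\<not> hd y" by auto
        have mm: "map Not (map Not y) = y" by (simp add: comp_def)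
        have "bval (map Not (map Not y)) < bval (map Not y)"
          using ny by (intro bval_Not_lt) (auto simp: hd_map)
        then have "key y < key (map Not y)" using mm by (simp add: key_def)
        moreover have "p (map Not y) \<noteq> 0" using pF y by simp
        then have "key (map Not y) < Suc n" using Suc.prems by blast
        ultimately show False using y by simp
      qed
      then show ?thesis using pF y by (auto simp: V'_def)
    qed
    then obtain gs where gs: "gs \<in> lists C" "concat gs = y" using factor_exists by blast
    define P where "P = nc_prod (map E gs)"
    define q where "q = p + nc_scale (- p y) P"
    have PF: "P \<in> dih_invariants 3" using prod_in_F gs P_def by simp
    have qF: "q \<in> dih_invariants 3" unfolding q_def using Suc.prems(1) PF by (intro F_add F_scale)
    have Pv: "P w = (if inCh gs w then 1 else 0)" for w by (simp add: P_def nc_prod_E)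
    have "\<forall>w. q w \<noteq> 0 \<longrightarrow> key w < n"
    proof (intro allI impI)
      fix w assume qw: "q w \<noteq> 0"
      have "w \<noteq> y" using qw gs inCh_concat by (auto simp: q_def nc_scale_def Pv)
      then have kne: "key w \<noteq> n" using y key_inj by metis
      have "p w \<noteq> 0 \<or> inCh gs w" using qw by (auto simp: q_def nc_scale_def Pv split: if_splits)
      then have "key w \<le> n"
      proof
        assume "p w \<noteq> 0" then show ?thesis using Suc.prems by fastforce
      next
        assume "inCh gs w" then show ?thesis using inCh_key gs y by metis
      qed
      then show "key w < n" using kne by simp
    qed
    then have "q \<in> nc.span (nc_prod ` lists Y0)" using Suc.IH qF by blast
    moreover have "nc_scale (p y) P \<in> nc.span (nc_prod ` lists Y0)"
      unfolding P_def by (intro nc.span_scale prod_in_span gs)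
    ultimately have "q + nc_scale (p y) P \<in> nc.span (nc_prod ` lists Y0)" by (rule nc.span_add)
    moreover have "q + nc_scale (p y) P = p" by (auto simp: q_def nc_scale_def fun_eq_iff)
    ultimately show ?thesis by simp
  qed
qed

lemma Y0_span: "nc.span (nc_prod ` lists Y0) = dih_invariants 3"
proof
  show "nc.span (nc_prod ` lists Y0) \<subseteq> dih_invariants 3"
  proof (rule nc.span_minimal[OF _ F_subspace], rule subsetI)
    fix v assume "v \<in> nc_prod ` lists Y0"
    then obtain ys where "ys \<in> lists Y0" "v = nc_prod ys" by auto
    then obtain gs where "gs \<in> lists C" "v = nc_prod (map E gs)" using lists_Y0 by auto
    then show "v \<in> dih_invariants 3" using prod_in_F by simp
  qed
  show "dih_invariants 3 \<subseteq> nc.span (nc_prod ` lists Y0)"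
  proof
    fix p assume p: "p \<in> dih_invariants 3"
    then have fin: "finite {w. p w \<noteq> 0}" by (simp add: F_iff nc_elems_def)
    have "\<forall>w. p w \<noteq> 0 \<longrightarrow> key w < Suc (Max (key ` {w. p w \<noteq> 0}))"
      using fin by (auto simp: le_imp_less_Suc)
    then show "p \<in> nc.span (nc_prod ` lists Y0)" using span_all_aux p by blast
  qed
qed

lemma Y0_free: "free_homog_generators Y0 (dih_invariants 3)"
  unfolding free_homog_generators_def
  using Y0_inj Y0_indep Y0_span E_facts by (auto simp: Y0_def)


lemma hdeg_E: "g \<in> C \<Longrightarrow> hdeg (E g) = length g"
  using E_facts[of g] hdeg[of "E g"] nc_homog_unique by blast

lemma hdim_V': "inv_hdim 3 k = card {w \<in> V'. length w = k}"
proof -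
  have "inv_hdim 3 k = card {ys \<in> lists Y0. sum_list (map hdeg ys) = k}"
    using GL[OF Y0_free] by simp
  also have "{ys \<in> lists Y0. sum_list (map hdeg ys) = k} = map E ` {gs \<in> lists C. length (concat gs) = k}"
  proof -
    have h: "sum_list (map hdeg (map E gs)) = length (concat gs)" if "gs \<in> lists C" for gs
      using that by (induction gs) (auto simp: hdeg_E)
    show ?thesis
    proof (rule set_eqI, rule iffI)
      fix ys assume "ys \<in> {ys \<in> lists Y0. sum_list (map hdeg ys) = k}"
      then have "ys \<in> lists Y0" "sum_list (map hdeg ys) = k" by auto
      then obtain gs where "gs \<in> lists C" "ys = map E gs" "sum_list (map hdeg ys) = k"
        using lists_Y0 by blast
      then show "ys \<in> map E ` {gs \<in> lists C. length (concat gs) = k}" using h by auto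
    next
      fix ys assume "ys \<in> map E ` {gs \<in> lists C. length (concat gs) = k}"
      then obtain gs where "gs \<in> lists C" "ys = map E gs" "length (concat gs) = k" by auto
      then have "ys \<in> lists Y0" using lists_Y0 by blast
      then show "ys \<in> {ys \<in> lists Y0. sum_list (map hdeg ys) = k}" using h \<open>gs \<in> lists C\<close> \<open>ys = map E gs\<close> \<open>length (concat gs) = k\<close> by simp
    qed
  qed
  also have "card \<dots> = card {gs \<in> lists C. length (concat gs) = k}"
    by (rule card_image, rule inj_on_subset[OF inj_on_map_lists[OF E_inj]]) auto
  also have "\<dots> = card (concat ` {gs \<in> lists C. length (concat gs) = k})"
  proof (rule card_image[symmetric], rule inj_onI)
    fix x y assume "x \<in> {gs \<in> lists C. length (concat gs) = k}" "y \<in> {gs \<in> lists C. length (concat gs) = k}"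
      "concat x = concat y"
    then show "x = y" using factor_unique[of x y] by simp
  qed
  also have "concat ` {gs \<in> lists C. length (concat gs) = k} = {w \<in> V'. length w = k}"
  proof
    show "concat ` {gs \<in> lists C. length (concat gs) = k} \<subseteq> {w \<in> V'. length w = k}"
      using concat_C by auto
    show "{w \<in> V'. length w = k} \<subseteq> concat ` {gs \<in> lists C. length (concat gs) = k}"
    proof
      fix w assume "w \<in> {w \<in> V'. length w = k}"
      then obtain gs where "gs \<in> lists C" "concat gs = w" "length w = k" using factor_exists by blast
      then show "w \<in> concat ` {gs \<in> lists C. length (concat gs) = k}" by auto
    qed
  qed
  finally show ?thesis .
qed

lemma fin_len: "finite {w :: bool list. length w = n \<and> P w}"
  using finite_lists_length_eq[of "UNIV :: bool set" n] by (rule rev_finite_subset) auto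

lemma card_len_Suc:
  "card {w :: bool list. length w = Suc n \<and> P w} =
     card {w. length w = n \<and> P (False # w)} + card {w. length w = n \<and> P (True # w)}"
proof -
  have "{w :: bool list. length w = Suc n \<and> P w} =
      Cons False ` {w. length w = n \<and> P (False # w)} \<union> Cons True ` {w. length w = n \<and> P (True # w)}"
  proof (rule set_eqI)
    fix w :: "bool list"
    show "w \<in> {w. length w = Suc n \<and> P w} \<longleftrightarrow>
      w \<in> Cons False ` {w. length w = n \<and> P (False # w)} \<union> Cons True ` {w. length w = n \<and> P (True # w)}"
    proof (cases w)
      case (Cons x xs) then show ?thesis by (cases x) auto
    qed auto
  qed
  then have "card {w :: bool list. length w = Suc n \<and> P w} =
      card (Cons False ` {w. length w = n \<and> P (False # w)}) + card (Cons True ` {w. length w = n \<and> P (True # w)})"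
    by (simp only:) (rule card_Un_disjoint, auto simp: fin_len)
  then show ?thesis by (simp add: card_image)
qed

definition cnt :: "nat \<Rightarrow> int \<Rightarrow> nat" where
  "cnt n r = card {w. length w = n \<and> wt w mod 3 = r}"

lemma cnt_Suc:
  "cnt (Suc n) 0 = cnt n 2 + cnt n 1"
  "cnt (Suc n) 1 = cnt n 0 + cnt n 2"
  "cnt (Suc n) 2 = cnt n 1 + cnt n 0"
proof -
  have e: "\<And>x::int. ((x + 1) mod 3 = 0) = (x mod 3 = 2)" "\<And>x::int. ((x - 1) mod 3 = 0) = (x mod 3 = 1)"
    "\<And>x::int. ((x + 1) mod 3 = 1) = (x mod 3 = 0)" "\<And>x::int. ((x - 1) mod 3 = 1) = (x mod 3 = 2)"
    "\<And>x::int. ((x + 1) mod 3 = 2) = (x mod 3 = 1)" "\<And>x::int. ((x - 1) mod 3 = 2) = (x mod 3 = 0)"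
    by presburger+
  show "cnt (Suc n) 0 = cnt n 2 + cnt n 1" "cnt (Suc n) 1 = cnt n 0 + cnt n 2"
    "cnt (Suc n) 2 = cnt n 1 + cnt n 0"
    unfolding cnt_def card_len_Suc by (simp_all add: e)
qed

lemma cnt_0: "cnt 0 0 = 1" "cnt 0 1 = 0" "cnt 0 2 = 0"
proof -
  have "{w :: bool list. length w = 0 \<and> wt w mod 3 = 0} = {[]}" by auto
  moreover have "{w :: bool list. length w = 0 \<and> wt w mod 3 = 1} = {}" by auto
  moreover have "{w :: bool list. length w = 0 \<and> wt w mod 3 = 2} = {}" by auto
  ultimately show "cnt 0 0 = 1" "cnt 0 1 = 0" "cnt 0 2 = 0" by (simp_all add: cnt_def)
qed

lemma cnt_inv: "cnt n 1 = cnt n 2 \<and> cnt n 0 + cnt n 1 + cnt n 2 = 2 ^ n"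
  by (induction n) (auto simp: cnt_0 cnt_Suc)

lemma cnt_rec: "cnt (Suc n) 1 + cnt n 1 = 2 ^ n"
  using cnt_inv[of n] by (simp add: cnt_Suc)

lemma cnt_rec2: "cnt (Suc (Suc n)) 1 = cnt (Suc n) 1 + 2 * cnt n 1"
  using cnt_rec[of n] cnt_rec[of "Suc n"] by simp

lemma V'_count: "card {w \<in> V'. length w = Suc n} = cnt n 1"
proof -
  have "{w \<in> V'. length w = Suc n} = Cons True ` {w. length w = n \<and> wt w mod 3 = 1}"
  proof (rule set_eqI)
    fix w :: "bool list"
    have e: "\<And>x::int. ((x - 1) mod 3 = 0) = (x mod 3 = 1)" by presburger
    show "w \<in> {w \<in> V'. length w = Suc n} \<longleftrightarrow> w \<in> Cons True ` {w. length w = n \<and> wt w mod 3 = 1}"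
    proof (cases w)
      case (Cons x xs) then show ?thesis by (cases x) (auto simp: V'_def e)
    qed (auto simp: V'_def)
  qed
  then show ?thesis by (simp add: card_image cnt_def)
qed

lemma V'_count0: "card {w \<in> V'. length w = 0} = 1"
proof -
  have "{w \<in> V'. length w = 0} = {[]}" by (auto simp: V'_def)
  then show ?thesis by simp
qed


lemma lists_count:
  fixes A :: "'a set" and \<delta> :: "'a \<Rightarrow> nat"
  assumes pos: "\<forall>a\<in>A. \<delta> a \<ge> 1" and fin: "\<forall>d. finite {a\<in>A. \<delta> a = d}"
  shows "finite {xs \<in> lists A. sum_list (map \<delta> xs) = k} \<and>
    card {xs \<in> lists A. sum_list (map \<delta> xs) = k} =
      (if k = 0 then 1 else (\<Sum>d\<in>{1..k}. card {a\<in>A. \<delta> a = d} * card {xs \<in> lists A. sum_list (map \<delta> xs) = k - d}))"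
proof (induction k rule: less_induct)
  case (less k)
  define L where "L j = {xs \<in> lists A. sum_list (map \<delta> xs) = j}" for j
  define Ad where "Ad d = {a\<in>A. \<delta> a = d}" for d
  show ?case
  proof (cases "k = 0")
    case True
    have "L 0 = {[]}"
    proof (rule set_eqI)
      fix xs show "xs \<in> L 0 \<longleftrightarrow> xs \<in> {[]}"
        using pos by (cases xs) (auto simp: L_def)
    qed
    then show ?thesis using True by (simp add: L_def)
  next
    case False
    have eq: "L k = (\<Union>d\<in>{1..k}. (\<lambda>(a, xs). a # xs) ` (Ad d \<times> L (k - d)))"
    proof (rule set_eqI, rule iffI)
      fix xs assume xs: "xs \<in> L k"
      then obtain a ys where a: "xs = a # ys" using False by (cases xs) (auto simp: L_def)
      then have "a \<in> A" "ys \<in> lists A" "\<delta> a + sum_list (map \<delta> ys) = k" using xs by (auto simp: L_def)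
      moreover have "\<delta> a \<ge> 1" using pos \<open>a \<in> A\<close> by auto
      ultimately show "xs \<in> (\<Union>d\<in>{1..k}. (\<lambda>(a, xs). a # xs) ` (Ad d \<times> L (k - d)))"
        using a by (auto simp: Ad_def L_def intro!: bexI[of _ "\<delta> a"] image_eqI[of _ _ "(a, ys)"])
    next
      fix xs assume "xs \<in> (\<Union>d\<in>{1..k}. (\<lambda>(a, xs). a # xs) ` (Ad d \<times> L (k - d)))"
      then obtain d a ys where "d \<in> {1..k}" "a \<in> Ad d" "ys \<in> L (k - d)" "xs = a # ys" by auto
      then show "xs \<in> L k" by (auto simp: Ad_def L_def)
    qed
    have finL: "finite (L (k - d))" if "d \<in> {1..k}" for d
      using less.IH[of "k - d"] that False by (auto simp: L_def)
    have finA: "finite (Ad d)" for d using fin by (simp add: Ad_def)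
    have inj: "inj_on (\<lambda>(a, xs). a # xs) X" for X :: "('a \<times> 'a list) set"
      by (auto simp: inj_on_def)
    have fin_piece: "finite ((\<lambda>(a, xs). a # xs) ` (Ad d \<times> L (k - d)))" if "d \<in> {1..k}" for d
      using finL[OF that] finA by auto
    have "finite (L k)" unfolding eq using fin_piece by auto
    moreover have "card (L k) = (\<Sum>d\<in>{1..k}. card ((\<lambda>(a, xs). a # xs) ` (Ad d \<times> L (k - d))))"
      unfolding eq
    proof (rule card_UN_disjoint)
      show "\<forall>i\<in>{1..k}. \<forall>j\<in>{1..k}. i \<noteq> j \<longrightarrow>
        (\<lambda>(a, xs). a # xs) ` (Ad i \<times> L (k - i)) \<inter> (\<lambda>(a, xs). a # xs) ` (Ad j \<times> L (k - j)) = {}"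
        by (auto simp: Ad_def)
    qed (use fin_piece in auto)
    moreover have "card ((\<lambda>(a, xs). a # xs) ` (Ad d \<times> L (k - d))) = card (Ad d) * card (L (k - d))" for d
      by (subst card_image[OF inj]) (simp add: card_cartesian_product)
    ultimately show ?thesis using False by (simp add: L_def Ad_def)
  qed
qed

lemma fps_coeff3:
  fixes f :: "complex fps"
  shows "(f * (1 - fps_X - fps_const c * fps_X ^ 2)) $ k =
    f $ k - (if k = 0 then 0 else f $ (k - 1)) - c * (if k < 2 then 0 else f $ (k - 2))"
proof -
  have "f * (1 - fps_X - fps_const c * fps_X ^ 2) = f - fps_X * f - fps_const c * (fps_X ^ 2 * f)"
    by (simp add: algebra_simps)
  then show ?thesis by (simp add: fps_X_power_mult_nth)
qed

definition hseq :: "nat \<Rightarrow> nat" where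
  "hseq k = (if k = 0 then 1 else cnt (k - 1) 1)"

lemma hdim_hseq: "inv_hdim 3 k = hseq k"
proof (cases k)
  case 0 then show ?thesis using V'_count0 by (simp add: hdim_V' hseq_def)
next
  case (Suc n) then show ?thesis using V'_count[of n] by (simp add: hdim_V' hseq_def)
qed

lemma hilbert_mult: "inv_hilbert_series 3 * (1 - fps_X - fps_const 2 * fps_X ^ 2) = 1 - fps_X - fps_const 1 * fps_X ^ 2"
proof (rule fps_ext)
  fix k
  have h: "inv_hilbert_series 3 $ j = of_nat (hseq j)" for j
    by (simp add: inv_hilbert_series_def hdim_hseq)
  consider "k = 0" | "k = 1" | "k = 2" | m where "k = Suc (Suc (Suc m))"
    by (metis One_nat_def Suc_1 not0_implies_Suc)
  then show "(inv_hilbert_series 3 * (1 - fps_X - fps_const 2 * fps_X ^ 2)) $ k = (1 - fps_X - fps_const 1 * fps_X ^ 2) $ k"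
  proof cases
    case 1 then show ?thesis by (simp add: fps_coeff3 h hseq_def)
  next
    case 2 then show ?thesis by (simp add: fps_coeff3[where f = "inv_hilbert_series 3"] h hseq_def cnt_0)
  next
    case 3
    have "cnt 1 1 = 1" using cnt_Suc(2)[of 0] cnt_0 by simp
    then show ?thesis using 3 by (simp add: fps_coeff3[where f = "inv_hilbert_series 3"] h hseq_def cnt_0 fps_X_power_mult_nth)
  next
    case 4
    have "of_nat (cnt (Suc (Suc m)) 1) = (of_nat (cnt (Suc m) 1) + 2 * of_nat (cnt m 1) :: complex)"
      using cnt_rec2[of m] by simp
    then show ?thesis using 4 by (simp add: fps_coeff3[where f = "inv_hilbert_series 3"] h hseq_def fps_X_power_mult_nth)
  qed
qed


lemma hilbert: "inv_hilbert_series 3 = (1 - fps_X - fps_X ^ 2) / (1 - fps_X - 2 * fps_X ^ 2)"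
proof -
  define D :: "complex fps" where "D = 1 - fps_X - fps_const 2 * fps_X ^ 2"
  define N :: "complex fps" where "N = 1 - fps_X - fps_const 1 * fps_X ^ 2"
  have D0: "D $ 0 \<noteq> 0" by (simp add: D_def)
  have "(1 - fps_X - fps_X ^ 2) / (1 - fps_X - 2 * fps_X ^ 2) = N / D"
    by (simp add: D_def N_def numeral_fps_const)
  also have "\<dots> = N * inverse D" by (rule fps_divide_unit[OF D0])
  also have "N = inv_hilbert_series 3 * D" using hilbert_mult by (simp add: D_def N_def)
  also have "inv_hilbert_series 3 * D * inverse D = inv_hilbert_series 3"
    using inverse_mult_eq_1'[OF D0] by (simp add: mult.assoc)
  finally show ?thesis ..
qed

lemma Y_props:
  assumes Y: "free_homog_generators Y (dih_invariants 3)" and y: "y \<in> Y"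
  shows "y \<noteq> 0 \<and> hdeg y \<ge> 1 \<and> nc_homog (hdeg y) y"
proof -
  have Yh: "\<forall>y\<in>Y. \<exists>d. nc_homog d y" and inj: "inj_on nc_prod (lists Y)"
    and ind: "\<not> nc.dependent (nc_prod ` lists Y)"
    using Y by (auto simp: free_homog_generators_def)
  have "\<exists>d. nc_homog d y" using Yh y by blast
  then have h: "nc_homog (hdeg y) y" by (rule hdeg)
  have "[y] \<in> lists Y" using y by simp
  then have yin: "y \<in> nc_prod ` lists Y" using nc_prod_single[of y] by (metis image_eqI)
  have "[] \<in> lists Y" by simp
  then have oin: "nc_one \<in> nc_prod ` lists Y" using nc_prod_Nil by (metis image_eqI)
  have ne: "y \<noteq> 0"
  proof
    assume "y = 0"
    then have "0 \<in> nc_prod ` lists Y" using yin by simp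
    then show False using ind nc.dependent_zero by metis
  qed
  have yo: "y \<noteq> nc_one"
  proof
    assume "y = nc_one"
    then have "nc_prod [y] = nc_prod []" using nc_prod_single by simp
    then show False using inj_onD[OF inj, of "[y]" "[]"] y by simp
  qed
  have "hdeg y \<noteq> 0"
  proof
    assume "hdeg y = 0"
    then have h0: "\<forall>w. y w \<noteq> 0 \<longrightarrow> length w = 0" using h by (simp add: nc_homog_def)
    have "y = nc_scale (y []) nc_one"
    proof
      fix w show "y w = nc_scale (y []) nc_one w"
        using h0 by (cases "w = []") (auto simp: nc_scale_def nc_one_def)
    qed
    moreover have "nc_one \<in> nc_prod ` lists Y - {y}" using oin yo by auto
    ultimately have "y \<in> nc.span (nc_prod ` lists Y - {y})"
      using nc.span_scale[OF nc.span_base] by metis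
    then have "\<exists>a\<in>nc_prod ` lists Y. a \<in> nc.span (nc_prod ` lists Y - {a})"
      by (rule bexI[of _ y]) (rule yin)
    then have "nc.dependent (nc_prod ` lists Y)" unfolding nc.dependent_def .
    then show False using ind by simp
  qed
  then show ?thesis using ne h by simp
qed

lemma Y_fin:
  assumes Y: "free_homog_generators Y (dih_invariants 3)"
  shows "finite {y \<in> Y. hdeg y = d}"
proof -
  have "(\<lambda>y. [y]) ` {y \<in> Y. hdeg y = d} \<subseteq> {ys \<in> lists Y. sum_list (map hdeg ys) = d}" by auto
  moreover have "finite {ys \<in> lists Y. sum_list (map hdeg ys) = d}" using GL[OF Y, of d] by blast
  ultimately have "finite ((\<lambda>y. [y]) ` {y \<in> Y. hdeg y = d})"
    by (rule finite_subset)
  then show ?thesis by (rule finite_imageD) (auto simp: inj_on_def)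
qed

definition Fb :: "complex fps" where
  "Fb = Abs_fps (\<lambda>d. of_nat (if 2 \<le> d then fib (d - 1) else 0))"

lemma Fb_mult: "Fb * (1 - fps_X - fps_const 1 * fps_X ^ 2) = fps_X ^ 2"
proof (rule fps_ext)
  fix k
  consider "k = 0" | "k = 1" | "k = 2" | "k = 3" | m where "k = Suc (Suc (Suc (Suc m)))"
    by (metis One_nat_def Suc_1 numeral_3_eq_3 not0_implies_Suc)
  then show "(Fb * (1 - fps_X - fps_const 1 * fps_X ^ 2)) $ k = fps_X ^ 2 $ k"
  proof cases
    case 4 then show ?thesis by (subst fps_coeff3) (simp add: Fb_def fps_X_power_nth numeral_3_eq_3)
  next
    case 5
    have "fib (Suc (Suc (Suc m))) = fib (Suc (Suc m)) + fib (Suc m)" by simp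
    then have "(of_nat (fib (Suc (Suc (Suc m)))) :: complex) = of_nat (fib (Suc (Suc m))) + of_nat (fib (Suc m))"
      by (metis of_nat_add)
    then show ?thesis using 5 by (subst fps_coeff3) (simp add: Fb_def fps_X_power_nth)
  qed (subst fps_coeff3, simp add: Fb_def fps_X_power_nth)+
qed

lemma Y_count:
  assumes Y: "free_homog_generators Y (dih_invariants 3)"
  shows "card {y \<in> Y. hdeg y = d} = (if 2 \<le> d then fib (d - 1) else 0)"
proof -
  define H where "H = inv_hilbert_series 3"
  define G :: "complex fps" where "G = Abs_fps (\<lambda>d. of_nat (card {y \<in> Y. hdeg y = d}))"
  define L where "L k = {ys \<in> lists Y. sum_list (map hdeg ys) = k}" for k
  have pos: "\<forall>a\<in>Y. hdeg a \<ge> 1" using Y_props[OF Y] by blast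
  have fin: "\<forall>d. finite {a\<in>Y. hdeg a = d}" using Y_fin[OF Y] by blast
  have Hk: "H $ k = of_nat (card (L k))" for k
    using GL[OF Y, of k] by (simp add: H_def inv_hilbert_series_def L_def)
  have e0: "{y \<in> Y. hdeg y = 0} = {}" using pos by force
  have G0: "G $ 0 = 0" unfolding G_def fps_nth_Abs_fps e0 by simp
  have HG: "H = 1 + G * H"
  proof (rule fps_ext)
    fix k
    show "H $ k = (1 + G * H) $ k"
    proof (cases "k = 0")
      case True
      then show ?thesis using lists_count[OF pos fin, of 0] G0 by (simp add: Hk L_def fps_mult_nth)
    next
      case False
      have "(G * H) $ k = (\<Sum>i=0..k. G $ i * H $ (k - i))" by (rule fps_mult_nth)
      also have "\<dots> = G $ 0 * H $ k + (\<Sum>i=1..k. G $ i * H $ (k - i))"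
        by (subst sum.atLeast_Suc_atMost) auto
      also have "\<dots> = (\<Sum>i=1..k. of_nat (card {y \<in> Y. hdeg y = i} * card (L (k - i))))"
        unfolding G0 by (simp add: G_def Hk)
      also have "\<dots> = of_nat (card (L k))"
        using lists_count[OF pos fin, of k] False by (simp add: L_def)
      finally show ?thesis using False by (simp add: Hk)
    qed
  qed
  define D :: "complex fps" where "D = 1 - fps_X - fps_const 2 * fps_X ^ 2"
  define N :: "complex fps" where "N = 1 - fps_X - fps_const 1 * fps_X ^ 2"
  have HD: "H * D = N" using hilbert_mult by (simp add: H_def D_def N_def)
  have "G * N = G * H * D" using HD by (simp add: mult.assoc)
  also have "G * H = H - 1" using HG by (simp add: algebra_simps)
  also have "(H - 1) * D = N - D" using HD by (simp add: algebra_simps)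
  also have "N - D = fps_X ^ 2" by (simp add: N_def D_def algebra_simps numeral_fps_const[symmetric])
  finally have GN: "G * N = Fb * N" using Fb_mult by (simp add: N_def)
  have N0: "N $ 0 \<noteq> 0" by (simp add: N_def)
  have "N \<noteq> 0" using N0 by auto
  then have "G = Fb" using GN by simp
  then have "G $ d = Fb $ d" by simp
  then show ?thesis by (simp add: G_def Fb_def)
qed

theorem mainTheorem2:
  shows "inv_hilbert_series 3 =
           (1 - fps_X - fps_X ^ 2) / (1 - fps_X - 2 * fps_X ^ 2)
       \<and> (\<exists>Y. free_homog_generators Y (dih_invariants 3))
       \<and> (\<forall>Y. free_homog_generators Y (dih_invariants 3) \<longrightarrow>
              {y \<in> Y. nc_homog 1 y} = {} \<and>
              (\<forall>d\<ge>2. finite {y \<in> Y. nc_homog d y} \<and>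
                      card {y \<in> Y. nc_homog d y} = fib (d - 1)))"
proof -
  have part3: "{y \<in> Y. nc_homog 1 y} = {} \<and>
              (\<forall>d\<ge>2. finite {y \<in> Y. nc_homog d y} \<and>
                      card {y \<in> Y. nc_homog d y} = fib (d - 1))"
    if Y: "free_homog_generators Y (dih_invariants 3)" for Y
  proof -
    have eq: "{y \<in> Y. nc_homog d y} = {y \<in> Y. hdeg y = d}" for d
      using Y_props[OF Y] nc_homog_unique by blast
    have "card {y \<in> Y. hdeg y = 1} = 0" using Y_count[OF Y, of 1] by simp
    then have "{y \<in> Y. hdeg y = 1} = {}" using Y_fin[OF Y, of 1] by simp
    then show ?thesis using Y_fin[OF Y] Y_count[OF Y] by (simp add: eq)
  qed
  show ?thesis using hilbert Y0_free part3 by blast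
qed

end
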